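(* For finite simple graphs $G$ and $H$ with disjoint vertex sets, $\mathrm{mur}(G\cup H)\le \mathrm{mur}(G)+|V(H)|+1$.
   Context: For a finite simple undirected graph $G$ on vertices $v_1,\dots,v_n$, let $A_G$ be its $(0,1)$-adjacency matrix, $D_G=\mathrm{diag}(d_1,\dots,d_n)$ with $d_i$ the degree of $v_i$, $I$ the $n\times n$ identity matrix and $J$ the $n\times n$ all-ones matrix. A universal adjacency matrix of $G$ is any matrix $\alpha A_G+\beta I+\gamma J+\delta D_G$ with real scalars $\alpha,\beta,\gamma,\delta$ and $\alpha\neq 0$. The minimum universal rank $\mathrm{mur}(G)$ is the minimum rank over all universal adjacency matrices of $G$. The union $G\cup H$ is the graph with vertex set $V(G)\cup V(H)$ and edge set $E(G)\cup E(H)$. *)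

theory Defs
  imports Complex_Main
begin

definition simple_graph :: "'a set \<Rightarrow> ('a \<times> 'a) set \<Rightarrow> bool" where
  "simple_graph V E \<longleftrightarrow> finite V \<and> E \<subseteq> V \<times> V \<and> sym E \<and> irrefl E"

definition degree :: "('a \<times> 'a) set \<Rightarrow> 'a \<Rightarrow> nat" where
  "degree E v = card {u. (v, u) \<in> E}"

text \<open>Matrices indexed by the vertex set: functions 'a => 'a => real.
The universal adjacency matrix alpha*A + beta*I + gamma*J + delta*D.\<close>
definition univ_adj :: "('a \<times> 'a) set \<Rightarrow> real \<Rightarrow> real \<Rightarrow> real \<Rightarrow> real \<Rightarrow> 'a \<Rightarrow> 'a \<Rightarrow> real" where
  "univ_adj E \<alpha> \<beta> \<gamma> \<delta> i j =
     \<alpha> * (if (i, j) \<in> E then 1 else 0) + \<beta> * (if i = j then 1 else 0) + \<gamma>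
     + \<delta> * (if i = j then real (degree E i) else 0)"

definition rows_indep :: "'a set \<Rightarrow> ('a \<Rightarrow> 'a \<Rightarrow> real) \<Rightarrow> 'a set \<Rightarrow> bool" where
  "rows_indep V M S \<longleftrightarrow>
     (\<forall>c :: 'a \<Rightarrow> real. (\<forall>j\<in>V. (\<Sum>i\<in>S. c i * M i j) = 0) \<longrightarrow> (\<forall>i\<in>S. c i = 0))"

definition mat_rank :: "'a set \<Rightarrow> ('a \<Rightarrow> 'a \<Rightarrow> real) \<Rightarrow> nat" where
  "mat_rank V M = Max {card S | S. S \<subseteq> V \<and> rows_indep V M S}"

definition mur :: "'a set \<Rightarrow> ('a \<times> 'a) set \<Rightarrow> nat" where
  "mur V E = (LEAST r. \<exists>\<alpha> \<beta> \<gamma> \<delta>. \<alpha> \<noteq> 0 \<and> r = mat_rank V (univ_adj E \<alpha> \<beta> \<gamma> \<delta>))"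

end

theory Submission
  imports Defs
begin

lemma sum_upd0:
  fixes d f :: "'a \<Rightarrow> real"
  assumes "finite S" "i0 \<in> S"
  shows "(\<Sum>i\<in>S. (if i = i0 then 0 else d i) * f i) = (\<Sum>i\<in>S - {i0}. d i * f i)"
proof -
  have "(\<Sum>i\<in>S. (if i = i0 then 0 else d i) * f i)
      = (if i0 = i0 then 0 else d i0) * f i0 + (\<Sum>i\<in>S - {i0}. (if i = i0 then 0 else d i) * f i)"
    by (rule sum.remove[OF assms])
  also have "\<dots> = (\<Sum>i\<in>S - {i0}. d i * f i)" by (simp cong: sum.cong_simp)
  finally show ?thesis .
qed

lemma key:
  assumes fin: "finite S" and ind: "rows_indep V M S" and sub: "V1 \<subseteq> V"
    and eq1: "\<forall>i\<in>S. \<forall>j\<in>V1. M i j = M1 i j"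
    and eq2: "\<forall>i\<in>S. \<forall>j\<in>V - V1. M i j = g"
  shows "\<exists>T\<subseteq>S. rows_indep V1 M1 T \<and> card S \<le> card T + 1"
proof (cases "rows_indep V1 M1 S")
  case True then show ?thesis by auto
next
  case False
  then obtain c i0 where c1: "\<forall>j\<in>V1. (\<Sum>i\<in>S. c i * M1 i j) = 0"
    and i0: "i0 \<in> S" "c i0 \<noteq> 0"
    unfolding rows_indep_def by blast
  have sc: "g * (\<Sum>i\<in>S. c i) \<noteq> 0"
  proof
    assume g0: "g * (\<Sum>i\<in>S. c i) = 0"
    have "\<forall>j\<in>V. (\<Sum>i\<in>S. c i * M i j) = 0"
    proof
      fix j assume j: "j \<in> V"
      show "(\<Sum>i\<in>S. c i * M i j) = 0"
      proof (cases "j \<in> V1")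
        case True
        then have "(\<Sum>i\<in>S. c i * M i j) = (\<Sum>i\<in>S. c i * M1 i j)"
          using eq1 by (intro sum.cong) auto
        then show ?thesis using c1 True by simp
      next
        case False
        then have "(\<Sum>i\<in>S. c i * M i j) = (\<Sum>i\<in>S. c i * g)"
          using eq2 j by (intro sum.cong) auto
        also have "\<dots> = g * (\<Sum>i\<in>S. c i)" by (simp add: sum_distrib_left mult.commute)
        finally show ?thesis using g0 by simp
      qed
    qed
    then show False using ind i0 unfolding rows_indep_def by blast
  qed
  then have g: "g \<noteq> 0" and cs: "(\<Sum>i\<in>S. c i) \<noteq> 0" by auto
  define T where "T = S - {i0}"
  have "rows_indep V1 M1 T"
    unfolding rows_indep_def
  proof (intro allI impI)
    fix d assume hd: "\<forall>j\<in>V1. (\<Sum>i\<in>T. d i * M1 i j) = 0"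
    define d' where "d' = (\<lambda>i. if i = i0 then 0 else d i)"
    define s where "s = (\<Sum>i\<in>T. d i)"
    define K where "K = s / (\<Sum>i\<in>S. c i)"
    define e where "e = (\<lambda>i. d' i - K * c i)"
    have sd: "\<And>f. (\<Sum>i\<in>S. d' i * f i) = (\<Sum>i\<in>T. d i * f i)"
      unfolding d'_def T_def using sum_upd0[OF fin i0(1)] by blast
    have "\<forall>j\<in>V. (\<Sum>i\<in>S. e i * M i j) = 0"
    proof
      fix j assume j: "j \<in> V"
      show "(\<Sum>i\<in>S. e i * M i j) = 0"
      proof (cases "j \<in> V1")
        case True
        then have "(\<Sum>i\<in>S. e i * M i j) = (\<Sum>i\<in>S. d' i * M1 i j - K * (c i * M1 i j))"
          using eq1 unfolding e_def by (intro sum.cong) (auto simp: algebra_simps)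
        also have "\<dots> = (\<Sum>i\<in>S. d' i * M1 i j) - K * (\<Sum>i\<in>S. c i * M1 i j)"
          by (simp add: sum_subtractf sum_distrib_left)
        also have "\<dots> = 0" using sd[of "\<lambda>i. M1 i j"] hd c1 True by simp
        finally show ?thesis .
      next
        case False
        then have "(\<Sum>i\<in>S. e i * M i j) = (\<Sum>i\<in>S. (d' i * 1 - K * c i) * g)"
          using eq2 j unfolding e_def by (intro sum.cong) auto
        also have "\<dots> = g * ((\<Sum>i\<in>S. d' i * 1) - K * (\<Sum>i\<in>S. c i))"
          by (simp add: sum_distrib_right sum_subtractf sum_distrib_left algebra_simps)
        also have "\<dots> = 0" using sd[of "\<lambda>i. 1"] cs unfolding K_def s_def by simp
        finally show ?thesis .
      qed
    qed
    then have e0: "\<forall>i\<in>S. e i = 0" using ind unfolding rows_indep_def by blast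
    then have "K * c i0 = 0" using i0 unfolding e_def d'_def by auto
    then have K0: "K = 0" using i0 by simp
    show "\<forall>i\<in>T. d i = 0"
    proof
      fix i assume "i \<in> T"
      then show "d i = 0" using e0 K0 unfolding e_def d'_def T_def by auto
    qed
  qed
  moreover have "card S \<le> card T + 1" unfolding T_def using fin i0
    by (simp add: card_Diff_singleton)
  ultimately show ?thesis unfolding T_def by blast
qed

lemma indep_subset:
  assumes "rows_indep V M S" "S' \<subseteq> S" "finite S"
  shows "rows_indep V M S'"
  unfolding rows_indep_def
proof (intro allI impI)
  fix c assume h: "\<forall>j\<in>V. (\<Sum>i\<in>S'. c i * M i j) = 0"
  define c' where "c' = (\<lambda>i. if i \<in> S' then c i else 0)"
  have "\<forall>j\<in>V. (\<Sum>i\<in>S. c' i * M i j) = 0"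
  proof
    fix j assume j: "j \<in> V"
    have "(\<Sum>i\<in>S. c' i * M i j) = (\<Sum>i\<in>S'. c' i * M i j)"
      using assms by (intro sum.mono_neutral_right) (auto simp: c'_def)
    also have "\<dots> = (\<Sum>i\<in>S'. c i * M i j)" by (intro sum.cong) (auto simp: c'_def)
    finally show "(\<Sum>i\<in>S. c' i * M i j) = 0" using h j by simp
  qed
  then have "\<forall>i\<in>S. c' i = 0" using assms(1) unfolding rows_indep_def by blast
  then show "\<forall>i\<in>S'. c i = 0" using assms(2) unfolding c'_def by (metis subsetD)
qed

lemma rank_ge:
  assumes "finite V" "S \<subseteq> V" "rows_indep V M S"
  shows "card S \<le> mat_rank V M"
  unfolding mat_rank_def
proof (rule Max_ge)
  show "finite {card S |S. S \<subseteq> V \<and> rows_indep V M S}"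
    proof (rule finite_subset[of _ "{0..card V}"])
    show "{card S |S. S \<subseteq> V \<and> rows_indep V M S} \<subseteq> {0..card V}"
    proof
      fix x assume "x \<in> {card S |S. S \<subseteq> V \<and> rows_indep V M S}"
      then obtain S where "x = card S" "S \<subseteq> V" by blast
      then show "x \<in> {0..card V}" using card_mono[OF assms(1)] by simp
    qed
  qed simp
  show "card S \<in> {card S |S. S \<subseteq> V \<and> rows_indep V M S}" using assms by auto
qed

lemma rank_le:
  assumes "finite V" "\<And>S. S \<subseteq> V \<Longrightarrow> rows_indep V M S \<Longrightarrow> card S \<le> b"
  shows "mat_rank V M \<le> b"
  unfolding mat_rank_def
proof (subst Max_le_iff)
  show "finite {card S |S. S \<subseteq> V \<and> rows_indep V M S}"
    proof (rule finite_subset[of _ "{0..card V}"])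
    show "{card S |S. S \<subseteq> V \<and> rows_indep V M S} \<subseteq> {0..card V}"
    proof
      fix x assume "x \<in> {card S |S. S \<subseteq> V \<and> rows_indep V M S}"
      then obtain S where "x = card S" "S \<subseteq> V" by blast
      then show "x \<in> {0..card V}" using card_mono[OF assms(1)] by simp
    qed
  qed simp
  show "{card S |S. S \<subseteq> V \<and> rows_indep V M S} \<noteq> {}"
  proof -
    have "rows_indep V M {}" by (simp add: rows_indep_def)
    then have "card {} \<in> {card S |S. S \<subseteq> V \<and> rows_indep V M S}"
      by (intro CollectI exI[of _ "{}"]) simp
    then show ?thesis by blast
  qed
  show "\<forall>a\<in>{card S |S. S \<subseteq> V \<and> rows_indep V M S}. a \<le> b" using assms by auto
qed

theorem theorem16:
  fixes V1 V2 :: "'a set" and E1 E2 :: "('a \<times> 'a) set"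
  assumes "simple_graph V1 E1" and "simple_graph V2 E2" and "V1 \<inter> V2 = {}"
  shows "mur (V1 \<union> V2) (E1 \<union> E2) \<le> mur V1 E1 + card V2 + 1"
proof -
  have f1: "finite V1" and s1: "E1 \<subseteq> V1 \<times> V1" using assms(1) by (auto simp: simple_graph_def)
  have f2: "finite V2" and s2: "E2 \<subseteq> V2 \<times> V2" using assms(2) by (auto simp: simple_graph_def)
  have "\<exists>\<alpha> \<beta> \<gamma> \<delta>. \<alpha> \<noteq> 0 \<and> mur V1 E1 = mat_rank V1 (univ_adj E1 \<alpha> \<beta> \<gamma> \<delta>)"
    unfolding mur_def by (rule LeastI[of _ "mat_rank V1 (univ_adj E1 1 0 0 0)"]) (rule exI[of _ 1], auto)
  then obtain \<alpha> \<beta> \<gamma> \<delta> where a: "\<alpha> \<noteq> 0" and r: "mur V1 E1 = mat_rank V1 (univ_adj E1 \<alpha> \<beta> \<gamma> \<delta>)"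
    by blast
  define M where "M = univ_adj (E1 \<union> E2) \<alpha> \<beta> \<gamma> \<delta>"
  define M1 where "M1 = univ_adj E1 \<alpha> \<beta> \<gamma> \<delta>"
  have le: "mur (V1 \<union> V2) (E1 \<union> E2) \<le> mat_rank (V1 \<union> V2) M"
    unfolding mur_def M_def by (rule Least_le) (use a in blast)
  have deg: "degree (E1 \<union> E2) i = degree E1 i" if "i \<in> V1" for i
  proof -
    have "{u. (i, u) \<in> E1 \<union> E2} = {u. (i, u) \<in> E1}" using s2 that assms(3) by auto
    then show ?thesis unfolding degree_def by simp
  qed
  have eq1: "\<forall>i\<in>V1. \<forall>j\<in>V1. M i j = M1 i j"
  proof (intro ballI)
    fix i j assume ij: "i \<in> V1" "j \<in> V1"
    have "(i, j) \<in> E1 \<union> E2 \<longleftrightarrow> (i, j) \<in> E1" using s2 ij assms(3) by auto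
    then show "M i j = M1 i j" unfolding M_def M1_def univ_adj_def using deg ij by simp
  qed
  have eq2: "\<forall>i\<in>V1. \<forall>j\<in>(V1 \<union> V2) - V1. M i j = \<gamma>"
  proof (intro ballI)
    fix i j assume ij: "i \<in> V1" "j \<in> (V1 \<union> V2) - V1"
    have "(i, j) \<notin> E1 \<union> E2" using s1 s2 ij assms(3) by auto
    moreover have "i \<noteq> j" using ij by auto
    ultimately show "M i j = \<gamma>" unfolding M_def univ_adj_def by simp
  qed
  have "mat_rank (V1 \<union> V2) M \<le> mat_rank V1 M1 + card V2 + 1"
  proof (rule rank_le)
    show "finite (V1 \<union> V2)" using f1 f2 by simp
    fix S assume S: "S \<subseteq> V1 \<union> V2" "rows_indep (V1 \<union> V2) M S"
    have fS: "finite S" using S(1) f1 f2 finite_subset by blast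
    have "rows_indep (V1 \<union> V2) M (S \<inter> V1)" using indep_subset[OF S(2) _ fS] by blast
    moreover have "finite (S \<inter> V1)" using fS by simp
    moreover have "V1 \<subseteq> V1 \<union> V2" by simp
    moreover have "\<forall>i\<in>S \<inter> V1. \<forall>j\<in>V1. M i j = M1 i j" using eq1 by simp
    moreover have "\<forall>i\<in>S \<inter> V1. \<forall>j\<in>(V1 \<union> V2) - V1. M i j = \<gamma>" using eq2 by blast
    ultimately have "\<exists>T\<subseteq>S \<inter> V1. rows_indep V1 M1 T \<and> card (S \<inter> V1) \<le> card T + 1"
      using key[of "S \<inter> V1" "V1 \<union> V2" M V1 M1 \<gamma>] by blast
    then obtain T where T: "T \<subseteq> S \<inter> V1" "rows_indep V1 M1 T" "card (S \<inter> V1) \<le> card T + 1"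
      by blast
    have "card T \<le> mat_rank V1 M1" using rank_ge[OF f1 _ T(2)] T(1) by blast
    moreover have "card (S \<inter> V2) \<le> card V2" using f2 by (simp add: card_mono)
    moreover have "card S \<le> card (S \<inter> V1) + card (S \<inter> V2)"
    proof -
      have "S = (S \<inter> V1) \<union> (S \<inter> V2)" using S(1) by auto
      then have "card S = card ((S \<inter> V1) \<union> (S \<inter> V2))" by simp
      also have "\<dots> \<le> card (S \<inter> V1) + card (S \<inter> V2)" by (rule card_Un_le)
      finally show ?thesis .
    qed
    ultimately show "card S \<le> mat_rank V1 M1 + card V2 + 1" using T(3) by linarith
  qed
  then show ?thesis using le r unfolding M1_def by linarith
qed

end
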